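(* Let $P=\operatorname{conv}(W(\Lambda))$ be a full-dimensional $W$-symmetric polytope and $K\subseteq S$. Let $\mathcal{F}_K$ be the set of facets of $P$ whose barycenters lie in $C_K$, and for a facet $F$ let $W_F$ be its stabilizer in $W_K$. Let $\mathcal{F}=\{(F,s): F\in\mathcal{F}_K,\ s\in W_K/W_F\}$. (1) The map $F\mapsto F\cap C_K$ for $F\in\mathcal{F}_K$, and $k\mapsto H_k\cap P$ for $k\in K$, is a bijection from $\mathcal{F}_K\sqcup K$ onto the set of facets of the polytope $P/W_K=P\cap C_K$. (2) The map $(F,s)\mapsto s(F)$ is a bijection from $\mathcal{F}$ onto the set of facets of $P$.
   Context: $V$ is a real Euclidean space of dimension $n$, $R$ a reduced root system spanning $V$ with simple system $S=\{\alpha_1,\dots,\alpha_n\}$, identified with $\{1,\dots,n\}$; $r_i$ is the reflection $x\mapsto x-\frac{2\langle x,\alpha_i\rangle}{\langle\alpha_i,\alpha_i\rangle}\alpha_i$ and $H_i$ its fixed hyperplane. $W$ is generated by all $r_i$, $W_K$ by $r_k$, $k\in K$. $C_K=\{x:\langle x,\alpha_k\rangle\ge0\ \forall k\in K\}$; $\Lambda\subset C_S$ finite. $P/W_K$ is identified with $P\cap C_K$ via the fundamental domain $C_K$. *)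

theory Defs
  imports "HOL-Analysis.Analysis"
begin

definition refl :: "'a::euclidean_space \<Rightarrow> 'a \<Rightarrow> 'a" where
  "refl a x = x - ((2 * (x \<bullet> a)) / (a \<bullet> a)) *\<^sub>R a"

definition root_system :: "'a::euclidean_space set \<Rightarrow> bool" where
  "root_system R \<longleftrightarrow> finite R \<and> 0 \<notin> R \<and> span R = UNIV \<and>
     (\<forall>a\<in>R. refl a ` R = R) \<and>
     (\<forall>a\<in>R. \<forall>b\<in>R. (2 * (b \<bullet> a)) / (a \<bullet> a) \<in> \<int>)"

definition reduced :: "'a::euclidean_space set \<Rightarrow> bool" where
  "reduced R \<longleftrightarrow> (\<forall>a\<in>R. \<forall>c::real. c *\<^sub>R a \<in> R \<longrightarrow> c = 1 \<or> c = -1)"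

definition simple_system :: "'a::euclidean_space set \<Rightarrow> 'a set \<Rightarrow> bool" where
  "simple_system R S \<longleftrightarrow> S \<subseteq> R \<and> independent S \<and>
     (\<forall>b\<in>R. \<exists>c. b = (\<Sum>a\<in>S. c a *\<^sub>R a) \<and> (\<forall>a\<in>S. c a \<in> \<int>) \<and>
        ((\<forall>a\<in>S. c a \<ge> 0) \<or> (\<forall>a\<in>S. c a \<le> 0)))"

inductive_set weyl_group :: "'a::euclidean_space set \<Rightarrow> ('a \<Rightarrow> 'a) set"
  for K :: "'a set" where
  id: "id \<in> weyl_group K"
| step: "w \<in> weyl_group K \<Longrightarrow> a \<in> K \<Longrightarrow> refl a \<circ> w \<in> weyl_group K"

definition cone :: "'a::euclidean_space set \<Rightarrow> 'a set" where
  "cone K = {x. \<forall>k\<in>K. x \<bullet> k \<ge> 0}"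

definition wall :: "'a::euclidean_space \<Rightarrow> 'a set" where
  "wall k = {x. x \<bullet> k = 0}"

definition barycenter :: "'a::euclidean_space set \<Rightarrow> 'a" where
  "barycenter F = (1 / real (card {v. v extreme_point_of F})) *\<^sub>R
                   (\<Sum>v\<in>{v. v extreme_point_of F}. v)"

definition stabilizer :: "'a::euclidean_space set \<Rightarrow> 'a set \<Rightarrow> ('a \<Rightarrow> 'a) set" where
  "stabilizer K F = {w \<in> weyl_group K. w ` F = F}"

definition left_cosets :: "'a::euclidean_space set \<Rightarrow> 'a set \<Rightarrow> ('a \<Rightarrow> 'a) set set" where
  "left_cosets K F = {(\<lambda>u. w \<circ> u) ` stabilizer K F | w. w \<in> weyl_group K}"

end

theory Submission
  imports Defs
begin

section \<open>Reflections\<close>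

lemma refl_linear: "linear (refl a)"
  unfolding linear_iff refl_def by (simp add: inner_add_left algebra_simps add_divide_distrib)

lemma refl_refl: "a \<noteq> 0 \<Longrightarrow> refl a (refl a x) = x"
  unfolding refl_def by (simp add: inner_diff_left algebra_simps)

lemma refl_inner: "a \<noteq> 0 \<Longrightarrow> refl a x \<bullet> refl a y = x \<bullet> y"
  unfolding refl_def by (simp add: inner_diff_left inner_diff_right algebra_simps inner_commute power2_eq_square)

lemma refl_self: "a \<noteq> 0 \<Longrightarrow> refl a a = - a"
  unfolding refl_def by (simp add: algebra_simps scaleR_2)

lemma refl_fix_iff: "a \<noteq> 0 \<Longrightarrow> refl a x = x \<longleftrightarrow> x \<bullet> a = 0"
  unfolding refl_def by auto

lemma refl_comp_self: "a \<noteq> 0 \<Longrightarrow> refl a \<circ> refl a = id"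
  by (auto simp: refl_refl)

lemma refl_inj: "a \<noteq> 0 \<Longrightarrow> inj (refl a)"
  by (metis injI refl_refl)

lemma refl_conj:
  assumes "linear u" "\<And>x y. u x \<bullet> u y = x \<bullet> y"
  shows "u (refl a x) = refl (u a) (u x)"
  unfolding refl_def using assms by (simp add: linear_diff linear_scale)

section \<open>Weyl group basics\<close>

lemma wg_linear: "w \<in> weyl_group K \<Longrightarrow> linear w"
proof (induction rule: weyl_group.induct)
  case id then show ?case using linear_id unfolding id_def .
next
  case (step w a) show ?case by (rule linear_compose[OF step.IH refl_linear])
qed

lemma wg_inner: "w \<in> weyl_group K \<Longrightarrow> 0 \<notin> K \<Longrightarrow> w x \<bullet> w y = x \<bullet> y"
proof (induction arbitrary: x y rule: weyl_group.induct)
  case id then show ?case by simp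
next
  case (step w a) then have "a \<noteq> 0" by auto
  then show ?case using step by (simp add: refl_inner)
qed

lemma wg_comp: "w \<in> weyl_group K \<Longrightarrow> v \<in> weyl_group K \<Longrightarrow> w \<circ> v \<in> weyl_group K"
proof (induction rule: weyl_group.induct)
  case id then show ?case by simp
next
  case (step w a)
  then have "refl a \<circ> (w \<circ> v) \<in> weyl_group K" using weyl_group.step by blast
  then show ?case by (metis comp_assoc)
qed

lemma wg_refl: "a \<in> K \<Longrightarrow> refl a \<in> weyl_group K"
  using weyl_group.step[OF weyl_group.id] by fastforce

lemma wg_inv: "w \<in> weyl_group K \<Longrightarrow> 0 \<notin> K \<Longrightarrow> \<exists>v\<in>weyl_group K. v \<circ> w = id \<and> w \<circ> v = id"
proof (induction rule: weyl_group.induct)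
  case id then show ?case using weyl_group.id[of K] by (intro bexI[of _ id]) auto
next
  case (step w a)
  then obtain v where v: "v \<in> weyl_group K" "v \<circ> w = id" "w \<circ> v = id" by blast
  have a0: "a \<noteq> 0" using step by auto
  have "v \<circ> refl a \<in> weyl_group K" using v(1) wg_comp wg_refl step by blast
  moreover have "(v \<circ> refl a) \<circ> (refl a \<circ> w) = id"
  proof -
    have "(v \<circ> refl a) \<circ> (refl a \<circ> w) = v \<circ> (refl a \<circ> refl a) \<circ> w" by (simp add: comp_assoc)
    then show ?thesis using v refl_comp_self[OF a0] by simp
  qed
  moreover have "(refl a \<circ> w) \<circ> (v \<circ> refl a) = id"
  proof -
    have "(refl a \<circ> w) \<circ> (v \<circ> refl a) = refl a \<circ> (w \<circ> v) \<circ> refl a" by (simp add: comp_assoc)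
    then show ?thesis using v a0 refl_comp_self[OF a0] by simp
  qed
  ultimately show ?case by blast
qed

lemma wg_bij: "w \<in> weyl_group K \<Longrightarrow> 0 \<notin> K \<Longrightarrow> bij w"
  by (metis wg_inv comp_eq_id_dest o_bij)

lemma wg_inj: "w \<in> weyl_group K \<Longrightarrow> 0 \<notin> K \<Longrightarrow> inj w"
  using wg_bij bij_is_inj by blast

lemma wg_mono: "w \<in> weyl_group K \<Longrightarrow> K \<subseteq> K' \<Longrightarrow> w \<in> weyl_group K'"
  by (induction rule: weyl_group.induct) (auto intro: weyl_group.intros)

primrec wd :: "'a::euclidean_space list \<Rightarrow> 'a \<Rightarrow> 'a" where
  "wd [] = id"
| "wd (a # l) = refl a \<circ> wd l"

lemma wd_append: "wd (l1 @ l2) = wd l1 \<circ> wd l2"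
  by (induction l1) (auto simp: comp_assoc)

lemma wg_wd: "w \<in> weyl_group K \<longleftrightarrow> (\<exists>l. set l \<subseteq> K \<and> w = wd l)"
proof
  assume "w \<in> weyl_group K" then show "\<exists>l. set l \<subseteq> K \<and> w = wd l"
  proof (induction rule: weyl_group.induct)
    case id then show ?case by (intro exI[of _ "[]"]) auto
  next
    case (step w a)
    then obtain l where "set l \<subseteq> K" "w = wd l" by auto
    then show ?case using step by (intro exI[of _ "a # l"]) auto
  qed
next
  assume "\<exists>l. set l \<subseteq> K \<and> w = wd l"
  then obtain l where "set l \<subseteq> K" "w = wd l" by auto
  then show "w \<in> weyl_group K"
    by (induction l arbitrary: w) (auto intro: weyl_group.intros)
qed



lemma exists_inner_values:
  fixes B :: "'a::euclidean_space set"
  assumes "independent B"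
  shows "\<exists>z. \<forall>b\<in>B. z \<bullet> b = g b"
proof -
  obtain f :: "'a \<Rightarrow> real" where f: "linear f" "\<forall>x\<in>B. f x = g x"
    using linear_independent_extend[OF assms] by blast
  define z where "z = (\<Sum>i\<in>Basis. f i *\<^sub>R i)"
  have zf: "z \<bullet> x = f x" for x
  proof -
    have "f x = f (\<Sum>i\<in>Basis. (x \<bullet> i) *\<^sub>R i)" by (simp add: euclidean_representation)
    also have "\<dots> = (\<Sum>i\<in>Basis. (x \<bullet> i) * f i)"
      using f(1) by (simp add: linear_sum linear_scale)
    finally show ?thesis unfolding z_def by (simp add: inner_sum_right inner_commute mult.commute)
  qed
  show ?thesis using f zf by (intro exI[of _ z]) auto
qed



locale rsK =
  fixes R S K :: "'a::euclidean_space set"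
  assumes rs: "root_system R" and red: "reduced R" and ss: "simple_system R S"
    and KS: "K \<subseteq> S"
begin

lemma finR: "finite R" and zR: "0 \<notin> R" and spanR: "span R = UNIV"
  and reflR: "\<And>a. a \<in> R \<Longrightarrow> refl a ` R = R"
  using rs unfolding root_system_def by auto

lemma SR: "S \<subseteq> R" and indS: "independent S"
  and Scomb: "\<And>b. b \<in> R \<Longrightarrow> \<exists>c. b = (\<Sum>a\<in>S. c a *\<^sub>R a) \<and> (\<forall>a\<in>S. c a \<in> \<int>) \<and>
        ((\<forall>a\<in>S. c a \<ge> 0) \<or> (\<forall>a\<in>S. c a \<le> 0))"
  using ss unfolding simple_system_def by auto

lemma finS: "finite S" using SR finR finite_subset by blast
lemma finK: "finite K" using KS finS finite_subset by blast
lemma KR: "K \<subseteq> R" using KS SR by blast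
lemma zS: "0 \<notin> S" using SR zR by blast
lemma zK: "0 \<notin> K" using KR zR by blast
lemma indK: "independent K" using indS KS independent_mono by blast

lemma R_span_S: "R \<subseteq> span S"
proof
  fix b assume "b \<in> R"
  then obtain c where "b = (\<Sum>a\<in>S. c a *\<^sub>R a)" using Scomb by blast
  then show "b \<in> span S" by (simp add: span_sum span_scale span_base)
qed

lemma spanS: "span S = UNIV"
  using R_span_S spanR span_mono[OF R_span_S] by (simp add: span_span top_le)

lemma wgS_R: "w \<in> weyl_group S \<Longrightarrow> w ` R \<subseteq> R"
proof (induction rule: weyl_group.induct)
  case id then show ?case by simp
next
  case (step w a)
  then have "refl a ` R = R" using SR reflR by blast
  then show ?case using step by (auto simp: image_comp[symmetric])
qed

lemma fin_wgS: "finite (weyl_group S)"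
proof -
  have "inj_on (\<lambda>w. restrict w R) (weyl_group S)"
  proof (rule inj_onI)
    fix w v assume w: "w \<in> weyl_group S" and v: "v \<in> weyl_group S"
      and eq: "restrict w R = restrict v R"
    show "w = v"
    proof
      fix x
      have "x \<in> span R" using spanR by simp
      then show "w x = v x"
        using linear_eq_on[OF wg_linear[OF w] wg_linear[OF v]] eq
        by (metis restrict_apply')
    qed
  qed
  moreover have "(\<lambda>w. restrict w R) ` weyl_group S \<subseteq> (\<Pi>\<^sub>E x\<in>R. R)"
    using wgS_R by (auto simp: PiE_iff) blast
  moreover have "finite (\<Pi>\<^sub>E x\<in>R. R)" using finR by (simp add: finite_PiE)
  ultimately show ?thesis using finite_imageD finite_subset by metis
qed

lemma fin_wgK: "finite (weyl_group K)"
  by (rule finite_subset[OF _ fin_wgS]) (use wg_mono KS in blast)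


abbreviation "RK \<equiv> R \<inter> span K"
abbreviation "pos v \<equiv> (\<forall>a\<in>K. 0 \<le> representation K v a)"
abbreviation "neg v \<equiv> (\<forall>a\<in>K. representation K v a \<le> 0)"

lemma K_RK: "a \<in> K \<Longrightarrow> a \<in> RK"
  using KR by (auto intro: span_base)

lemma RK_sign:
  assumes "b \<in> RK" shows "pos b \<or> neg b"
proof -
  have bR: "b \<in> R" and bK: "b \<in> span K" using assms by auto
  obtain c where c: "b = (\<Sum>a\<in>S. c a *\<^sub>R a)" "(\<forall>a\<in>S. c a \<ge> 0) \<or> (\<forall>a\<in>S. c a \<le> 0)"
    using Scomb[OF bR] by blast
  have bS: "b \<in> span S" using spanS by simp
  have e1: "(\<Sum>a\<in>S. representation S b a *\<^sub>R a) = b"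
    by (rule sum_representation_eq[OF indS bS finS order_refl])
  have "(\<Sum>a\<in>S. (c a - representation S b a) *\<^sub>R a) = 0"
    using c(1) e1 by (simp add: scaleR_diff_left sum_subtractf)
  then have ceq: "\<forall>a\<in>S. c a = representation S b a"
    using independentD[OF indS finS order_refl] by (metis eq_iff_diff_eq_0)
  have "representation S b = representation K b"
    by (rule representation_extend[OF indS bK KS])
  then have "\<forall>a\<in>K. representation K b a = c a" using ceq KS by auto
  then show ?thesis using c(2) KS by auto
qed

lemma rep_sum: "v \<in> span K \<Longrightarrow> (\<Sum>a\<in>K. representation K v a *\<^sub>R a) = v"
  by (rule sum_representation_eq[OF indK _ finK order_refl])

lemma pos_neg_zero:
  assumes "v \<in> span K" "pos v" "neg v" shows "v = 0"
proof -
  have "\<forall>a\<in>K. representation K v a = 0" using assms by (meson order_antisym)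
  then show ?thesis using rep_sum[OF assms(1)] by simp
qed

lemma neg_inner:
  assumes "y \<in> cone K" "v \<in> span K" "neg v" shows "y \<bullet> v \<le> 0"
proof -
  have "y \<bullet> v = (\<Sum>a\<in>K. representation K v a * (y \<bullet> a))"
    using rep_sum[OF assms(2)] by (metis (no_types, lifting) inner_sum_right inner_scaleR_right sum.cong)
  also have "\<dots> \<le> 0"
    using assms(1,3) unfolding cone_def by (auto intro!: sum_nonpos mult_nonpos_nonneg)
  finally show ?thesis .
qed

lemma rep_neg: "v \<in> span K \<Longrightarrow> representation K (- v) a = - representation K v a"
  using representation_neg[OF indK] by simp

lemma rep_basis: "a \<in> K \<Longrightarrow> representation K a b = (if b = a then 1 else 0)"
  using representation_basis[OF indK] by simp

lemma refl_span: "a \<in> K \<Longrightarrow> v \<in> span K \<Longrightarrow> refl a v \<in> span K"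
  unfolding refl_def by (intro span_diff span_scale) (auto intro: span_base)

lemma wgK_RK: "w \<in> weyl_group K \<Longrightarrow> b \<in> RK \<Longrightarrow> w b \<in> RK"
proof (induction rule: weyl_group.induct)
  case id then show ?case by simp
next
  case (step w a)
  then have "w b \<in> RK" by blast
  moreover have "refl a ` R = R" using step KR reflR by blast
  ultimately show ?case using refl_span[OF step(2)] by auto
qed

lemma lemmaA:
  assumes a: "a \<in> K" and b: "b \<in> RK" and pb: "pos b" and ba: "b \<noteq> a"
  shows "pos (refl a b)"
proof -
  have a0: "a \<noteq> 0" using a zK by auto
  have aS: "a \<in> span K" using a by (rule span_base)
  have bK: "b \<in> span K" using b by auto
  define m where "m = 2 * (b \<bullet> a) / (a \<bullet> a)"
  have rb: "refl a b = b - m *\<^sub>R a" unfolding refl_def m_def by simp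
  have rep_rb: "representation K (refl a b) c = representation K b c - m * (if c = a then 1 else 0)" for c
    unfolding rb using representation_diff[OF indK span_scale[OF aS] bK] representation_scale[OF indK aS] rep_basis[OF a]
    by simp
  have "\<exists>c\<in>K. c \<noteq> a \<and> representation K b c \<noteq> 0"
  proof (rule ccontr)
    assume "\<not> ?thesis"
    then have "\<forall>c\<in>K. c \<noteq> a \<longrightarrow> representation K b c = 0" by auto
    then have "(\<Sum>c\<in>K. representation K b c *\<^sub>R c) = representation K b a *\<^sub>R a"
      using a finK by (subst sum.remove[of _ a]) (auto intro: sum.neutral)
    then have beq: "b = representation K b a *\<^sub>R a" using rep_sum[OF bK] by simp
    have "b \<in> R" "a \<in> R" using b a KR by auto
    then have "representation K b a = 1 \<or> representation K b a = -1"
      using red beq unfolding reduced_def by metis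
    moreover have "representation K b a \<ge> 0" using pb a by auto
    ultimately have "b = a" using beq by auto
    then show False using ba by simp
  qed
  then obtain c where c: "c \<in> K" "c \<noteq> a" "representation K b c \<noteq> 0" by blast
  then have cpos: "representation K b c > 0" using pb by force
  have "refl a b \<in> RK"
    using wgK_RK[OF wg_refl[OF a] b] .
  then have "pos (refl a b) \<or> neg (refl a b)" by (rule RK_sign)
  moreover have "representation K (refl a b) c > 0" using rep_rb[of c] c cpos by simp
  ultimately show ?thesis using c(1) by force
qed


lemma wd_wg: "set l \<subseteq> K \<Longrightarrow> wd l \<in> weyl_group K"
  using wg_wd by blast

lemma wd_inner: "set l \<subseteq> K \<Longrightarrow> wd l x \<bullet> wd l y = x \<bullet> y"
  using wg_inner[OF wd_wg zK] by blast

lemma wd_linear: "set l \<subseteq> K \<Longrightarrow> linear (wd l)"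
  using wg_linear[OF wd_wg] by blast

lemma RK_nz: "b \<in> RK \<Longrightarrow> b \<noteq> 0" using zR by auto

lemma pos_basis: "a \<in> K \<Longrightarrow> pos a \<and> \<not> neg a"
  using rep_basis by auto

lemma deletion:
  assumes "set l \<subseteq> K" "a \<in> K" "neg (wd l a)"
  shows "\<exists>l'. set l' \<subseteq> K \<and> length l' < length l \<and> wd l \<circ> refl a = wd l'"
  using assms
proof (induction l)
  case Nil then show ?case using pos_basis by auto
next
  case (Cons s l)
  have sK: "s \<in> K" and lK: "set l \<subseteq> K" using Cons by auto
  define b where "b = wd l a"
  have bR: "b \<in> RK" unfolding b_def using wgK_RK[OF wd_wg[OF lK] K_RK[OF Cons(3)]] .
  show ?case
  proof (cases "neg b")
    case True
    then obtain l' where l': "set l' \<subseteq> K" "length l' < length l" "wd l \<circ> refl a = wd l'"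
      using Cons.IH[OF lK Cons(3)] b_def by blast
    have "wd (s # l) \<circ> refl a = refl s \<circ> (wd l \<circ> refl a)" by (simp add: comp_assoc)
    then have "wd (s # l) \<circ> refl a = wd (s # l')" using l'(3) by (metis wd.simps(2))
    moreover have "set (s # l') \<subseteq> K" "length (s # l') < length (s # l)" using l' sK by auto
    ultimately show ?thesis by blast
  next
    case False
    then have pb: "pos b" using RK_sign[OF bR] by blast
    have nr: "neg (refl s b)" using Cons(4) b_def by simp
    have "b = s"
    proof (rule ccontr)
      assume "b \<noteq> s"
      then have "pos (refl s b)" using lemmaA[OF sK bR pb] by blast
      moreover have "refl s b \<in> span K" using refl_span[OF sK] bR by auto
      ultimately have "refl s b = 0" using pos_neg_zero nr by blast
      then have "b = 0" using refl_refl[of s b] sK zK by (metis linear_0[OF refl_linear])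
      then show False using RK_nz[OF bR] by simp
    qed
    have conj: "wd l \<circ> refl a = refl s \<circ> wd l"
    proof
      fix x
      show "(wd l \<circ> refl a) x = (refl s \<circ> wd l) x"
        using refl_conj[OF wd_linear[OF lK] wd_inner[OF lK], of a x] \<open>b = s\<close> b_def by simp
    qed
    have s0: "s \<noteq> 0" using sK zK by auto
    have "wd (s # l) \<circ> refl a = refl s \<circ> (wd l \<circ> refl a)" by (simp add: comp_assoc)
    also have "\<dots> = (refl s \<circ> refl s) \<circ> wd l" using conj by (simp add: comp_assoc)
    also have "\<dots> = wd l" using refl_comp_self[OF s0] by simp
    finally have "wd (s # l) \<circ> refl a = wd l" .
    moreover have "length l < length (s # l)" by simp
    ultimately show ?thesis using lK by blast
  qed
qed

lemma fundamental_unique: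
  assumes "set l \<subseteq> K" "x \<in> cone K" "wd l x \<in> cone K"
  shows "wd l x = x"
  using assms
proof (induction "length l" arbitrary: l rule: less_induct)
  case less
  show ?case
  proof (cases l rule: rev_exhaust)
    case Nil then show ?thesis by simp
  next
    case (snoc l0 k)
    have kK: "k \<in> K" and l0K: "set l0 \<subseteq> K" using less(2) snoc by auto
    have k0: "k \<noteq> 0" using kK zK by auto
    have w: "wd l = wd l0 \<circ> refl k" using snoc by (simp add: wd_append)
    have wkR: "wd l k \<in> RK" using wgK_RK[OF wd_wg[OF less(2)] K_RK[OF kK]] .
    show ?thesis
    proof (cases "neg (wd l k)")
      case True
      have "x \<bullet> k = wd l x \<bullet> wd l k" using wd_inner[OF less(2)] by simp
      also have "\<dots> \<le> 0" using neg_inner[OF less(4) _ True] wkR by auto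
      finally have "x \<bullet> k \<le> 0" .
      moreover have "x \<bullet> k \<ge> 0" using less(3) kK unfolding cone_def by auto
      ultimately have "refl k x = x" using refl_fix_iff[OF k0] by simp
      then have e: "wd l x = wd l0 x" using w by simp
      have "wd l0 x = x" using less(1)[of l0] snoc l0K less(3,4) e by simp
      then show ?thesis using e by simp
    next
      case False
      then have "pos (wd l k)" using RK_sign[OF wkR] by blast
      moreover have "wd l k = - wd l0 k" using w refl_self[OF k0] linear_neg[OF wd_linear[OF l0K]] by simp
      moreover have "wd l0 k \<in> span K" using wgK_RK[OF wd_wg[OF l0K] K_RK[OF kK]] by simp
      ultimately have "neg (wd l0 k)" using rep_neg by fastforce
      then obtain l' where l': "set l' \<subseteq> K" "length l' < length l0" "wd l0 \<circ> refl k = wd l'"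
        using deletion[OF l0K kK] by blast
      have "wd l = wd l'" using w l'(3) by simp
      moreover have "wd l' x = x" using less(1)[of l'] l' snoc less(3,4) \<open>wd l = wd l'\<close> by simp
      ultimately show ?thesis by simp
    qed
  qed
qed

lemma fundamental_unique_wg:
  assumes "w \<in> weyl_group K" "x \<in> cone K" "w x \<in> cone K"
  shows "w x = x"
  using assms fundamental_unique wg_wd by metis

lemma fundamental_exists:
  "\<exists>w\<in>weyl_group K. w x \<in> cone K"
proof -
  obtain \<rho> where rho: "\<forall>k\<in>K. \<rho> \<bullet> k = 1" using exists_inner_values[OF indK, of "\<lambda>_. 1"] by blast
  define f where "f w = w x \<bullet> \<rho>" for w :: "'a \<Rightarrow> 'a"
  have ne: "weyl_group K \<noteq> {}" using weyl_group.id by blast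
  obtain w where w: "w \<in> weyl_group K" "\<forall>v\<in>weyl_group K. f v \<le> f w"
    using Max_in[of "f ` weyl_group K"] Max_ge[of "f ` weyl_group K"] fin_wgK ne
    by (metis (no_types, lifting) empty_is_image finite_imageI imageE image_eqI)
  have "w x \<in> cone K"
    unfolding cone_def
  proof (rule CollectI, rule ballI, rule ccontr)
    fix k assume kK: "k \<in> K" and "\<not> 0 \<le> w x \<bullet> k"
    then have neg: "w x \<bullet> k < 0" by simp
    have k0: "k \<noteq> 0" using kK zK by auto
    have kk: "k \<bullet> k > 0" using k0 by simp
    have "refl k \<circ> w \<in> weyl_group K" using weyl_group.step[OF w(1) kK] .
    then have le: "f (refl k \<circ> w) \<le> f w" using w(2) by blast
    have "f (refl k \<circ> w) = f w - 2 * (w x \<bullet> k) / (k \<bullet> k) * (k \<bullet> \<rho>)"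
      unfolding f_def refl_def by (simp add: inner_diff_left)
    moreover have "k \<bullet> \<rho> = 1" using rho kK by (metis inner_commute)
    moreover have "2 * (w x \<bullet> k) / (k \<bullet> k) < 0" using neg kk by (simp add: divide_neg_pos)
    ultimately have "f (refl k \<circ> w) > f w" by simp
    then show False using le by simp
  qed
  then show ?thesis using w(1) by blast
qed

end



section \<open>Barycenters of polytopes\<close>

abbreviation "verts F \<equiv> {v. v extreme_point_of F}"

lemma verts_sub: "verts F \<subseteq> F"
  by (auto simp: extreme_point_of_def)

lemma poly_verts:
  fixes F :: "'a::euclidean_space set"
  assumes "polytope F" "F \<noteq> {}"
  shows "finite (verts F)" "verts F \<noteq> {}" "F = convex hull (verts F)"
proof -
  show "finite (verts F)" by (rule finite_polyhedron_extreme_points[OF polytope_imp_polyhedron[OF assms(1)]])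
  show F: "F = convex hull (verts F)"
    by (rule Krein_Milman_Minkowski[OF polytope_imp_compact[OF assms(1)] polytope_imp_convex[OF assms(1)]])
  show "verts F \<noteq> {}" using F assms(2) by auto
qed

lemma bary_in:
  fixes F :: "'a::euclidean_space set"
  assumes "polytope F" "F \<noteq> {}"
  shows "barycenter F \<in> F"
proof -
  note pv = poly_verts[OF assms]
  have "card (verts F) > 0" using pv by (simp add: card_gt_0_iff)
  have "(\<Sum>v\<in>verts F. (1 / real (card (verts F))) *\<^sub>R v) \<in> F"
    by (rule convex_sum[OF pv(1) polytope_imp_convex[OF assms(1)]])
       (use \<open>card (verts F) > 0\<close> verts_sub in auto)
  then show ?thesis unfolding barycenter_def by (simp add: scaleR_sum_right)
qed

lemma bary_hyperplane:
  fixes F :: "'a::euclidean_space set"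
  assumes "polytope F" "F \<noteq> {}" "\<And>x. x \<in> F \<Longrightarrow> a \<bullet> x \<le> c" "a \<bullet> barycenter F = c"
  shows "F \<subseteq> {x. a \<bullet> x = c}"
proof -
  note pv = poly_verts[OF assms(1,2)]
  define N where "N = real (card (verts F))"
  have N: "N > 0" using pv unfolding N_def by (simp add: card_gt_0_iff)
  have "a \<bullet> barycenter F = (1 / N) * (\<Sum>v\<in>verts F. a \<bullet> v)"
    unfolding barycenter_def N_def[symmetric] by (simp only: inner_scaleR_right inner_sum_right)
  then have e: "(1 / N) * (\<Sum>v\<in>verts F. a \<bullet> v) = c" using assms(4) by simp
  have "(\<Sum>v\<in>verts F. a \<bullet> v) = N * c"
  proof -
    have "N * ((1 / N) * (\<Sum>v\<in>verts F. a \<bullet> v)) = (\<Sum>v\<in>verts F. a \<bullet> v)" using N by simp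
    then show ?thesis using e by metis
  qed
  moreover have "(\<Sum>v\<in>verts F. c) = N * c" unfolding N_def by simp
  ultimately have "(\<Sum>v\<in>verts F. c - a \<bullet> v) = 0" by (simp only: sum_subtractf)
  moreover have "0 \<le> c - a \<bullet> v" if "v \<in> verts F" for v
    using assms(3)[OF subsetD[OF verts_sub that]] by simp
  ultimately have "\<forall>v\<in>verts F. c - a \<bullet> v = 0" using sum_nonneg_eq_0_iff[OF pv(1), of "\<lambda>v. c - a \<bullet> v"] by simp
  then have "verts F \<subseteq> {x. a \<bullet> x = c}" by auto
  then have h: "convex hull (verts F) \<subseteq> {x. a \<bullet> x = c}"
    by (intro hull_minimal) (auto simp: convex_hyperplane)
  show ?thesis by (subst pv(3)) (rule h)
qed

lemma bary_rel_interior: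
  fixes F :: "'a::euclidean_space set"
  assumes "polytope F" "F \<noteq> {}"
  shows "barycenter F \<in> rel_interior F"
proof (rule ccontr)
  assume "barycenter F \<notin> rel_interior F"
  then have "barycenter F \<in> F - rel_interior F" using bary_in[OF assms] by simp
  moreover have "F - rel_interior F = \<Union> {G. G facet_of F}"
    by (rule rel_boundary_of_polyhedron[OF polytope_imp_polyhedron[OF assms(1)]])
  ultimately have "barycenter F \<in> \<Union> {G. G facet_of F}" by simp
  then obtain G where G0: "G \<in> {G. G facet_of F}" "barycenter F \<in> G" by (rule UnionE)
  then have G: "G facet_of F" "barycenter F \<in> G" by simp_all
  obtain a c where ac: "a \<noteq> 0" "F \<subseteq> {x. a \<bullet> x \<le> c}" "G = F \<inter> {x. a \<bullet> x = c}"
    by (rule facet_of_polyhedron[OF polytope_imp_polyhedron[OF assms(1)] G(1)])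
  have "a \<bullet> barycenter F = c" using G(2) unfolding ac(3) by simp
  moreover have "\<And>x. x \<in> F \<Longrightarrow> a \<bullet> x \<le> c" using ac(2) by blast
  ultimately have "F \<subseteq> {x. a \<bullet> x = c}"
    using bary_hyperplane[OF assms, of a c] by blast
  then have "G = F" using ac(3) by (simp add: Int_absorb2)
  then show False using G(1) by simp
qed

lemma verts_linear_image:
  fixes w :: "'a::euclidean_space \<Rightarrow> 'a"
  assumes "linear w" "inj w"
  shows "verts (w ` F) = w ` verts F"
proof -
  have *: "{w y} face_of w ` F \<longleftrightarrow> {y} face_of F" for y
    using face_of_linear_image[OF assms, of "{y}" F] by simp
  show ?thesis
  proof
    show "verts (w ` F) \<subseteq> w ` verts F"
    proof
      fix x assume "x \<in> verts (w ` F)"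
      then have x: "x extreme_point_of w ` F" by simp
      then have "x \<in> w ` F" using verts_sub by blast
      then obtain y where y: "y \<in> F" "x = w y" by blast
      then have "{w y} face_of w ` F" using x by (simp add: face_of_singleton)
      then have "y extreme_point_of F" using * by (simp add: face_of_singleton)
      then show "x \<in> w ` verts F" using y by blast
    qed
  next
    show "w ` verts F \<subseteq> verts (w ` F)"
    proof
      fix x assume "x \<in> w ` verts F"
      then obtain y where y: "y extreme_point_of F" "x = w y" by blast
      then have "{y} face_of F" by (simp add: face_of_singleton)
      then have "{w y} face_of w ` F" using * by blast
      then show "x \<in> verts (w ` F)" using y by (simp add: face_of_singleton)
    qed
  qed
qed

lemma bary_linear_image:
  fixes w :: "'a::euclidean_space \<Rightarrow> 'a"
  assumes "linear w" "inj w"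
  shows "barycenter (w ` F) = w (barycenter F)"
proof -
  have V: "verts (w ` F) = w ` verts F" by (rule verts_linear_image[OF assms])
  have c: "card (w ` verts F) = card (verts F)" using assms(2) by (simp add: card_image inj_on_subset)
  have "(\<Sum>v\<in>w ` verts F. v) = (\<Sum>v\<in>verts F. w v)"
    using sum.reindex[OF inj_on_subset[OF assms(2) subset_UNIV], of "\<lambda>x. x" "verts F"] by simp
  also have "\<dots> = w (\<Sum>v\<in>verts F. v)" using linear_sum[OF assms(1), of "\<lambda>x. x"] by simp
  finally have s: "(\<Sum>v\<in>w ` verts F. v) = w (\<Sum>v\<in>verts F. v)" .
  show ?thesis unfolding barycenter_def V c s by (rule linear_scale[OF assms(1), symmetric])
qed



locale rsP = rsK +
  fixes L P :: "'a::euclidean_space set"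
  assumes finL: "finite L" and LC: "L \<subseteq> cone S"
    and Pdef: "P = convex hull (\<Union>w\<in>weyl_group S. w ` L)"
    and full: "aff_dim P = int DIM('a)"
begin

abbreviation "Orb \<equiv> (\<Union>w\<in>weyl_group S. w ` L)"

lemma finOrb: "finite Orb" using fin_wgS finL by blast

lemma polyP: "polytope P" unfolding Pdef by (rule polytope_convex_hull[OF finOrb])
lemma convP: "convex P" using polyP polytope_imp_convex by blast
lemma polyhP: "polyhedron P" using polyP polytope_imp_polyhedron by blast
lemma PNE: "P \<noteq> {}" using full by auto
lemma affP: "affine hull P = UNIV" using full aff_dim_eq_full by blast

lemma wgS_linear: "w \<in> weyl_group S \<Longrightarrow> linear w" by (rule wg_linear)
lemma wgS_inj: "w \<in> weyl_group S \<Longrightarrow> inj w" using wg_inj zS by blast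
lemma wgS_inner: "w \<in> weyl_group S \<Longrightarrow> w x \<bullet> w y = x \<bullet> y" using wg_inner zS by blast
lemma wgK_S: "w \<in> weyl_group K \<Longrightarrow> w \<in> weyl_group S" using wg_mono KS by blast

lemma Orb_inv:
  assumes w: "w \<in> weyl_group S" shows "w ` Orb = Orb"
proof (rule equalityI)
  show "w ` Orb \<subseteq> Orb"
  proof
    fix x assume "x \<in> w ` Orb"
    then obtain v l where v: "v \<in> weyl_group S" "l \<in> L" "x = w (v l)" by blast
    have "w \<circ> v \<in> weyl_group S" using wg_comp[OF w v(1)] .
    moreover have "x = (w \<circ> v) l" using v(3) by simp
    ultimately show "x \<in> Orb" using v(2) by blast
  qed
  show "Orb \<subseteq> w ` Orb"
  proof
    fix x assume "x \<in> Orb"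
    then obtain v l where v: "v \<in> weyl_group S" "l \<in> L" "x = v l" by blast
    obtain u where u: "u \<in> weyl_group S" "u \<circ> w = id" "w \<circ> u = id" using wg_inv[OF w zS] by blast
    have "u \<circ> v \<in> weyl_group S" using wg_comp u(1) v(1) by blast
    then have "(u \<circ> v) l \<in> Orb" using v(2) by blast
    moreover have "w ((u \<circ> v) l) = x"
    proof -
      have "w ((u \<circ> v) l) = (w \<circ> u) (v l)" by simp
      then show ?thesis using u(3) v(3) by simp
    qed
    ultimately show "x \<in> w ` Orb" by (metis imageI)
  qed
qed

lemma P_inv: "w \<in> weyl_group S \<Longrightarrow> w ` P = P"
  unfolding Pdef by (simp only: convex_hull_linear_image[OF wgS_linear] Orb_inv)

lemma zero_interior: "0 \<in> interior P"
proof -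
  have "rel_interior P \<noteq> {}" using rel_interior_eq_empty convP PNE by blast
  then obtain p where p: "p \<in> interior P" using rel_interior_interior[OF affP] by auto
  define W where "W = weyl_group S"
  define N where "N = real (card W)"
  have finW: "finite W" unfolding W_def by (rule fin_wgS)
  have N: "N > 0" unfolding N_def using finW weyl_group.id[of S] W_def by (auto simp: card_gt_0_iff)
  define q where "q = (\<Sum>w\<in>W. (1 / N) *\<^sub>R w p)"
  have wp: "w p \<in> interior P" if "w \<in> W" for w
  proof -
    have "interior (w ` P) = w ` interior P"
      using interior_injective_linear_image[OF wgS_linear wgS_inj] that W_def by blast
    then show ?thesis using P_inv that W_def p by auto
  qed
  have qP: "q \<in> interior P"
    unfolding q_def
    by (rule convex_sum[OF finW convex_interior[OF convP]]) (use N N_def wp in auto)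
  have qa: "q \<bullet> a = 0" if aS: "a \<in> S" for a
  proof -
    have a0: "a \<noteq> 0" using aS zS by auto
    have img: "(\<lambda>w. refl a \<circ> w) ` W = W"
    proof
      show "(\<lambda>w. refl a \<circ> w) ` W \<subseteq> W" unfolding W_def using weyl_group.step aS by blast
      show "W \<subseteq> (\<lambda>w. refl a \<circ> w) ` W"
      proof
        fix w assume "w \<in> W"
        then have "refl a \<circ> w \<in> W" unfolding W_def using weyl_group.step aS by blast
        moreover have "w = refl a \<circ> (refl a \<circ> w)" using refl_comp_self[OF a0] by (metis comp_assoc id_comp)
        ultimately show "w \<in> (\<lambda>w. refl a \<circ> w) ` W" by blast
      qed
    qed
    have inj: "inj_on (\<lambda>w. refl a \<circ> w) W"
    proof (rule inj_onI)
      fix v w assume "refl a \<circ> v = refl a \<circ> w"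
      then have "refl a \<circ> (refl a \<circ> v) = refl a \<circ> (refl a \<circ> w)" by simp
      then show "v = w" using refl_comp_self[OF a0] by (metis comp_assoc id_comp)
    qed
    have "refl a q = (\<Sum>w\<in>W. (1 / N) *\<^sub>R refl a (w p))"
      unfolding q_def by (simp add: linear_sum[OF refl_linear] linear_scale[OF refl_linear])
    also have "\<dots> = (\<Sum>w\<in>W. (1 / N) *\<^sub>R (refl a \<circ> w) p)" by simp
    also have "\<dots> = (\<Sum>w\<in>(\<lambda>w. refl a \<circ> w) ` W. (1 / N) *\<^sub>R w p)"
      using sum.reindex[OF inj, of "\<lambda>w. (1 / N) *\<^sub>R w p"] by (simp add: comp_def)
    also have "\<dots> = q" unfolding img q_def ..
    finally show ?thesis using refl_fix_iff[OF a0] by simp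
  qed
  have "orthogonal q q"
    by (rule orthogonal_to_span[of q S q]) (use spanS qa in \<open>auto simp: orthogonal_def\<close>)
  then have "q = 0" by (simp add: orthogonal_self)
  then show ?thesis using qP by simp
qed

lemma facet_normal:
  assumes "F facet_of P"
  obtains u h where "u \<noteq> 0" "h > 0" "P \<subseteq> {x. u \<bullet> x \<le> h}" "F = P \<inter> {x. u \<bullet> x = h}"
proof -
  obtain u h where uh: "u \<noteq> 0" "P \<subseteq> {x. u \<bullet> x \<le> h}" "F = P \<inter> {x. u \<bullet> x = h}"
    by (rule facet_of_polyhedron[OF polyhP assms])
  obtain e where e: "e > 0" "ball 0 e \<subseteq> P" using zero_interior mem_interior by blast
  define y where "y = (e / (2 * norm u)) *\<^sub>R u"
  have nu: "norm u > 0" using uh(1) by simp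
  have "norm y = e / 2" unfolding y_def using nu e by simp
  then have "y \<in> P" using e by (auto simp: dist_norm)
  then have "u \<bullet> y \<le> h" using uh(2) by blast
  moreover have "u \<bullet> y = e / (2 * norm u) * (norm u)^2" unfolding y_def by (simp add: power2_norm_eq_inner)
  moreover have "e / (2 * norm u) * (norm u)^2 > 0" using nu e by simp
  ultimately have "h > 0" by linarith
  then show ?thesis using that uh by blast
qed

lemma facet_poly: "F facet_of P \<Longrightarrow> polytope F \<and> F \<noteq> {}"
  using face_of_polytope_polytope[OF polyP] facet_of_imp_face_of facet_of_def by blast

lemma facet_unique:
  assumes F: "F facet_of P" and F': "F' facet_of P" and b: "barycenter F \<in> F'"
  shows "F = F'"
proof -
  obtain u h where uh: "u \<noteq> 0" "h > 0" "P \<subseteq> {x. u \<bullet> x \<le> h}" "F' = P \<inter> {x. u \<bullet> x = h}"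
    using facet_normal[OF F'] by blast
  have FP: "F \<subseteq> P" using F facet_of_imp_subset by blast
  have "F \<subseteq> {x. u \<bullet> x = h}"
    by (rule bary_hyperplane) (use facet_poly[OF F] FP uh b in auto)
  then have sub: "F \<subseteq> F'" using FP uh(4) by blast
  have "F face_of F'" using face_of_subset[OF facet_of_imp_face_of[OF F] sub facet_of_imp_subset[OF F']] .
  moreover have "aff_dim F = aff_dim F'" using F F' by (simp add: facet_of_def)
  moreover have "convex F'" using F' facet_of_imp_face_of face_of_imp_convex by blast
  ultimately show ?thesis using face_of_aff_dim_lt by fastforce
qed

lemma facet_image:
  assumes w: "w \<in> weyl_group S" and F: "F facet_of P"
  shows "w ` F facet_of P"
proof -
  have "w ` F face_of w ` P"
    using face_of_linear_image[OF wgS_linear[OF w] wgS_inj[OF w]] F facet_of_imp_face_of by blast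
  moreover have "aff_dim (w ` F) = aff_dim F"
    using aff_dim_injective_linear_image[OF wgS_linear[OF w] wgS_inj[OF w]] by blast
  ultimately show ?thesis using F P_inv[OF w] by (simp add: facet_of_def)
qed

lemma bary_image: "w \<in> weyl_group S \<Longrightarrow> barycenter (w ` F) = w (barycenter F)"
  using bary_linear_image wgS_linear wgS_inj by blast

end



context rsP
begin

lemma wgK_linear: "w \<in> weyl_group K \<Longrightarrow> linear w" by (rule wg_linear)
lemma wgK_inj: "w \<in> weyl_group K \<Longrightarrow> inj w" using wg_inj zK by blast

lemma wgK_inv: "w \<in> weyl_group K \<Longrightarrow> \<exists>v\<in>weyl_group K. v \<circ> w = id \<and> w \<circ> v = id"
  using wg_inv zK by blast

lemma stab_id: "id \<in> stabilizer K F"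
  unfolding stabilizer_def using weyl_group.id by auto

lemma stab_mult:
  assumes g: "g \<in> stabilizer K F" shows "(\<lambda>u. g \<circ> u) ` stabilizer K F = stabilizer K F"
proof (rule equalityI)
  have gW: "g \<in> weyl_group K" and gF: "g ` F = F" using g unfolding stabilizer_def by auto
  show "(\<lambda>u. g \<circ> u) ` stabilizer K F \<subseteq> stabilizer K F"
  proof
    fix x assume "x \<in> (\<lambda>u. g \<circ> u) ` stabilizer K F"
    then obtain u where u: "u \<in> weyl_group K" "u ` F = F" "x = g \<circ> u" unfolding stabilizer_def by blast
    have "x \<in> weyl_group K" using wg_comp[OF gW u(1)] u(3) by simp
    moreover have "x ` F = F" using u gF by (metis image_comp)
    ultimately show "x \<in> stabilizer K F" unfolding stabilizer_def by blast
  qed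
  show "stabilizer K F \<subseteq> (\<lambda>u. g \<circ> u) ` stabilizer K F"
  proof
    fix u assume u: "u \<in> stabilizer K F"
    then have uW: "u \<in> weyl_group K" and uF: "u ` F = F" unfolding stabilizer_def by auto
    obtain g' where g': "g' \<in> weyl_group K" "g' \<circ> g = id" "g \<circ> g' = id" using wgK_inv[OF gW] by blast
    have "g' ` F = F"
    proof -
      have "g' ` (g ` F) = (g' \<circ> g) ` F" by (simp add: image_comp)
      then show ?thesis using gF g'(2) by simp
    qed
    then have "g' \<circ> u \<in> stabilizer K F"
      unfolding stabilizer_def using wg_comp[OF g'(1) uW] uF \<open>g' ` F = F\<close> by (metis (mono_tags, lifting) image_comp mem_Collect_eq)
    moreover have "u = g \<circ> (g' \<circ> u)" using g'(3) by (metis comp_assoc id_comp)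
    ultimately show "u \<in> (\<lambda>u. g \<circ> u) ` stabilizer K F" by blast
  qed
qed

lemma coset_image:
  assumes "w0 \<in> weyl_group K" "C = (\<lambda>u. w0 \<circ> u) ` stabilizer K F"
  shows "(SOME w. w \<in> C) ` F = w0 ` F"
proof -
  have "C \<noteq> {}" using assms(2) stab_id by blast
  then have "(SOME w. w \<in> C) \<in> C" by (simp add: some_in_eq)
  then obtain u where u: "u \<in> stabilizer K F" "(SOME w. w \<in> C) = w0 \<circ> u" using assms(2) by blast
  then have "u ` F = F" unfolding stabilizer_def by blast
  then show ?thesis using u(2) by (metis image_comp)
qed

lemma part2:
  "bij_betw (\<lambda>(F, C). (SOME w. w \<in> C) ` F)
     {(F, C). F facet_of P \<and> barycenter F \<in> cone K \<and> C \<in> left_cosets K F}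
     {G. G facet_of P}"
proof (rule bij_betw_imageI)
  show "inj_on (\<lambda>(F, C). (SOME w. w \<in> C) ` F)
     {(F, C). F facet_of P \<and> barycenter F \<in> cone K \<and> C \<in> left_cosets K F}"
  proof (rule inj_onI, clarify)
    fix F C F' C'
    assume F: "F facet_of P" "barycenter F \<in> cone K" "C \<in> left_cosets K F"
      and F': "F' facet_of P" "barycenter F' \<in> cone K" "C' \<in> left_cosets K F'"
      and eq: "(SOME w. w \<in> C) ` F = (SOME w. w \<in> C') ` F'"
    obtain w0 where w0: "w0 \<in> weyl_group K" "C = (\<lambda>u. w0 \<circ> u) ` stabilizer K F"
      using F(3) unfolding left_cosets_def by blast
    obtain w1 where w1: "w1 \<in> weyl_group K" "C' = (\<lambda>u. w1 \<circ> u) ` stabilizer K F'"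
      using F'(3) unfolding left_cosets_def by blast
    have e: "w0 ` F = w1 ` F'" using eq coset_image[OF w0] coset_image[OF w1] by simp
    obtain v where v: "v \<in> weyl_group K" "v \<circ> w1 = id" "w1 \<circ> v = id" using wgK_inv[OF w1(1)] by blast
    define g where "g = v \<circ> w0"
    have gW: "g \<in> weyl_group K" unfolding g_def using wg_comp v(1) w0(1) by blast
    have gF: "g ` F = F'"
    proof -
      have "g ` F = v ` (w1 ` F')" unfolding g_def using e by (metis image_comp)
      also have "\<dots> = F'" using v(2) by (simp add: image_comp)
      finally show ?thesis .
    qed
    have "barycenter F' = g (barycenter F)" using bary_image[OF wgK_S[OF gW]] gF by metis
    then have "barycenter F' = barycenter F"
      using fundamental_unique_wg[OF gW F(2)] F'(2) by simp
    then have "barycenter F \<in> F'" using bary_in facet_poly[OF F'(1)] by metis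
    then have FF: "F = F'" using facet_unique[OF F(1) F'(1)] by blast
    then have gs: "g \<in> stabilizer K F" using gW gF unfolding stabilizer_def by simp
    have w0g: "w0 = w1 \<circ> g" unfolding g_def using v(3) by (metis comp_assoc id_comp)
    have "C = (\<lambda>u. w1 \<circ> u) ` ((\<lambda>u. g \<circ> u) ` stabilizer K F)"
      unfolding w0(2) w0g by (simp add: image_image comp_assoc)
    also have "\<dots> = C'" using stab_mult[OF gs] w1(2) FF by simp
    finally show "F = F' \<and> C = C'" using FF by simp
  qed
  show "(\<lambda>(F, C). (SOME w. w \<in> C) ` F) `
     {(F, C). F facet_of P \<and> barycenter F \<in> cone K \<and> C \<in> left_cosets K F} = {G. G facet_of P}"
  proof (rule equalityI)
    show "(\<lambda>(F, C). (SOME w. w \<in> C) ` F) `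
     {(F, C). F facet_of P \<and> barycenter F \<in> cone K \<and> C \<in> left_cosets K F} \<subseteq> {G. G facet_of P}"
    proof clarify
      fix F C assume F: "F facet_of P" "barycenter F \<in> cone K" "C \<in> left_cosets K F"
      obtain w0 where w0: "w0 \<in> weyl_group K" "C = (\<lambda>u. w0 \<circ> u) ` stabilizer K F"
        using F(3) unfolding left_cosets_def by blast
      show "(SOME w. w \<in> C) ` F facet_of P"
        unfolding coset_image[OF w0] using facet_image[OF wgK_S[OF w0(1)] F(1)] .
    qed
    show "{G. G facet_of P} \<subseteq> (\<lambda>(F, C). (SOME w. w \<in> C) ` F) `
     {(F, C). F facet_of P \<and> barycenter F \<in> cone K \<and> C \<in> left_cosets K F}"
    proof
      fix G assume "G \<in> {G. G facet_of P}"
      then have G: "G facet_of P" by simp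
      obtain w where w: "w \<in> weyl_group K" "w (barycenter G) \<in> cone K" using fundamental_exists by blast
      define F where "F = w ` G"
      have F: "F facet_of P" unfolding F_def using facet_image[OF wgK_S[OF w(1)] G] .
      have bF: "barycenter F \<in> cone K" unfolding F_def using bary_image[OF wgK_S[OF w(1)]] w(2) by simp
      obtain v where v: "v \<in> weyl_group K" "v \<circ> w = id" "w \<circ> v = id" using wgK_inv[OF w(1)] by blast
      define C where "C = (\<lambda>u. v \<circ> u) ` stabilizer K F"
      have C: "C \<in> left_cosets K F" unfolding C_def left_cosets_def using v(1) by blast
      have "(SOME w. w \<in> C) ` F = v ` F" using coset_image[OF v(1) C_def] .
      also have "\<dots> = G" unfolding F_def using v(2) by (simp add: image_comp)
      finally have "G = (\<lambda>(F, C). (SOME w. w \<in> C) ` F) (F, C)" by simp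
      then show "G \<in> (\<lambda>(F, C). (SOME w. w \<in> C) ` F) `
        {(F, C). F facet_of P \<and> barycenter F \<in> cone K \<and> C \<in> left_cosets K F}"
        using F bF C by blast
    qed
  qed
qed

end



context rsP
begin

abbreviation "Q \<equiv> P \<inter> cone K"
abbreviation "Tpos \<equiv> {y. \<forall>j\<in>K. y \<bullet> j > 0}"

lemma cone_eq: "cone K = \<Inter> ((\<lambda>k. {x. k \<bullet> x \<ge> 0}) ` K)"
  unfolding cone_def by (auto simp: inner_commute)

lemma convex_cone: "convex (cone K)"
  unfolding cone_eq by (intro convex_Inter) (auto intro: convex_halfspace_ge)

lemma polyhedron_cone: "polyhedron (cone K)"
  unfolding cone_eq using finK by (intro polyhedron_Inter) (auto intro: polyhedron_halfspace_ge)

lemma convQ: "convex Q" using convP convex_cone by (rule convex_Int)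
lemma polyhQ: "polyhedron Q" using polyhP polyhedron_cone by (rule polyhedron_Int)

lemma open_Tpos': "open {y. \<forall>j\<in>K'. y \<bullet> j > 0}" if "K' \<subseteq> K" for K'
proof -
  have fin: "finite K'" using that finK finite_subset by blast
  have "{y. \<forall>j\<in>K'. y \<bullet> j > 0} = \<Inter> ((\<lambda>j. {y. j \<bullet> y > 0}) ` K') \<inter> UNIV" by (auto simp: inner_commute)
  moreover have "open (\<Inter> ((\<lambda>j. {y. j \<bullet> y > 0}) ` K'))"
    using fin by (intro open_INT) (auto intro: open_halfspace_gt)
  ultimately show ?thesis by simp
qed

lemma small_interior: "\<exists>t>0. t *\<^sub>R z \<in> interior P"
proof -
  obtain e where e: "e > 0" "ball 0 e \<subseteq> interior P"
    using zero_interior open_interior open_contains_ball by blast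
  define t where "t = e / (2 * (norm z + 1))"
  have "2 * (norm z + 1) > 0" by (simp add: add_nonneg_pos)
  then have t: "t > 0" unfolding t_def using e by (simp only: divide_pos_pos)
  have "norm (t *\<^sub>R z) = t * norm z" using t by simp
  also have "\<dots> < e"
  proof -
    have "t * norm z \<le> t * (norm z + 1)" using t by simp
    also have "\<dots> = e / 2"
    proof -
      have n1: "norm z + 1 > 0" by (simp add: add_nonneg_pos)
      then show ?thesis unfolding t_def by (simp add: field_simps)
    qed
    finally show ?thesis using e by simp
  qed
  finally have "t *\<^sub>R z \<in> ball 0 e" by simp
  then show ?thesis using e t by blast
qed

lemma affQ: "aff_dim Q = int DIM('a)"
proof -
  obtain \<rho> where rho: "\<forall>k\<in>K. \<rho> \<bullet> k = 1" using exists_inner_values[OF indK, of "\<lambda>_. 1"] by blast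
  obtain t where t: "t > 0" "t *\<^sub>R \<rho> \<in> interior P" using small_interior by blast
  have "t *\<^sub>R \<rho> \<in> Tpos" using rho t by simp
  then have ne: "interior P \<inter> Tpos \<noteq> {}" using t by blast
  have op: "open (interior P \<inter> Tpos)" using open_Tpos'[of K] by blast
  have "interior P \<inter> Tpos \<subseteq> Q"
    using interior_subset unfolding cone_def by (auto intro: less_imp_le)
  then have "aff_dim (interior P \<inter> Tpos) \<le> aff_dim Q" by (rule aff_dim_subset)
  moreover have "aff_dim (interior P \<inter> Tpos) = int DIM('a)" by (rule aff_dim_open[OF op ne])
  ultimately show ?thesis using aff_dim_le_DIM[of Q] by simp
qed

lemma affhQ: "affine hull Q = UNIV" using affQ aff_dim_eq_full by blast

lemma facet_sub_eq:
  assumes "G facet_of Q" "G' facet_of Q" "G \<subseteq> G'"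
  shows "G = G'"
proof (rule ccontr)
  assume ne: "G \<noteq> G'"
  have "G face_of G'"
    using face_of_subset[OF facet_of_imp_face_of[OF assms(1)] assms(3) facet_of_imp_subset[OF assms(2)]] .
  moreover have "convex G'" using assms(2) facet_of_imp_face_of face_of_imp_convex by blast
  ultimately have "aff_dim G < aff_dim G'" using face_of_aff_dim_lt ne by blast
  then show False using assms by (simp add: facet_of_def)
qed

lemma wall_facet:
  assumes kK: "k \<in> K"
  shows "(wall k \<inter> P \<inter> cone K) facet_of Q"
    and "\<exists>y\<in>wall k \<inter> P \<inter> cone K. \<forall>j\<in>K - {k}. y \<bullet> j > 0"
proof -
  have k0: "k \<noteq> 0" using kK zK by auto
  have eq: "wall k \<inter> P \<inter> cone K = Q \<inter> {x. k \<bullet> x = 0}"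
    unfolding wall_def by (auto simp: inner_commute)
  have face: "(wall k \<inter> P \<inter> cone K) face_of Q"
    unfolding eq by (rule face_of_Int_supporting_hyperplane_ge[OF convQ]) (use kK in \<open>auto simp: cone_def inner_commute\<close>)
  obtain z where z: "\<forall>j\<in>K. z \<bullet> j = (if j = k then 0 else 1)"
    using exists_inner_values[OF indK, of "\<lambda>j. if j = k then 0 else 1"] by blast
  obtain t where t: "t > 0" "t *\<^sub>R z \<in> interior P" using small_interior by blast
  define U where "U = interior P \<inter> {y. \<forall>j\<in>K - {k}. y \<bullet> j > 0}"
  have opU: "open U" unfolding U_def using open_Tpos'[of "K - {k}"] by blast
  define H where "H = {x. k \<bullet> x = 0}"
  have tzH: "t *\<^sub>R z \<in> H \<inter> U" unfolding H_def U_def using z t kK by (auto simp: inner_commute)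
  have sub: "H \<inter> U \<subseteq> wall k \<inter> P \<inter> cone K"
  proof
    fix x assume x: "x \<in> H \<inter> U"
    then have xk: "x \<bullet> k = 0" unfolding H_def by (simp add: inner_commute)
    have xP: "x \<in> P" using x interior_subset unfolding U_def by blast
    have "x \<bullet> j \<ge> 0" if "j \<in> K" for j
    proof (cases "j = k")
      case True then show ?thesis using xk by simp
    next
      case False then have "x \<bullet> j > 0" using x that unfolding U_def by blast
      then show ?thesis by simp
    qed
    then show "x \<in> wall k \<inter> P \<inter> cone K" unfolding wall_def cone_def using xk xP by blast
  qed
  have "aff_dim (H \<inter> U) = aff_dim H"
  proof (rule aff_dim_convex_Int_open)
    show "convex H" unfolding H_def by (rule convex_hyperplane)
    show "open U" by (rule opU)
    show "H \<inter> U \<noteq> {}" using tzH by blast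
  qed
  also have "\<dots> = int DIM('a) - 1" unfolding H_def using k0 by simp
  finally have ge: "int DIM('a) - 1 \<le> aff_dim (wall k \<inter> P \<inter> cone K)"
    using aff_dim_subset[OF sub] by simp
  have "aff_dim (wall k \<inter> P \<inter> cone K) \<le> aff_dim H"
    by (rule aff_dim_subset) (auto simp: H_def wall_def inner_commute)
  then have le: "aff_dim (wall k \<inter> P \<inter> cone K) \<le> int DIM('a) - 1" unfolding H_def using k0 by simp
  show "(wall k \<inter> P \<inter> cone K) facet_of Q"
    unfolding facet_of_def using face ge le affQ tzH sub by auto
  show "\<exists>y\<in>wall k \<inter> P \<inter> cone K. \<forall>j\<in>K - {k}. y \<bullet> j > 0"
    using tzH sub unfolding U_def by blast
qed

end



context rsP
begin

lemma F_facet: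
  assumes F: "F facet_of P" and bF: "barycenter F \<in> cone K"
  shows "(F \<inter> cone K) facet_of Q"
proof -
  obtain u h where uh: "u \<noteq> 0" "h > 0" "P \<subseteq> {x. u \<bullet> x \<le> h}" "F = P \<inter> {x. u \<bullet> x = h}"
    using facet_normal[OF F] by blast
  have eq: "F \<inter> cone K = Q \<inter> {x. u \<bullet> x = h}" using uh(4) by auto
  have face: "(F \<inter> cone K) face_of Q"
    unfolding eq by (rule face_of_Int_supporting_hyperplane_le[OF convQ]) (use uh(3) in auto)
  have pF: "polytope F" "F \<noteq> {}" using facet_poly[OF F] by auto
  define b where "b = barycenter F"
  have bF': "b \<in> F" using bary_in[OF pF] b_def by simp
  have bri: "b \<in> rel_interior F" using bary_rel_interior[OF pF] b_def by simp
  then obtain e where e: "e > 0" "ball b e \<inter> affine hull F \<subseteq> F" using mem_rel_interior_ball by blast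
  have affF: "aff_dim F = int DIM('a) - 1" using F full by (simp add: facet_of_def)
  have hyp: "affine hull F = {x. u \<bullet> x = h}"
  proof (rule affine_dim_equal)
    show "affine (affine hull F)" by simp
    show "affine {x. u \<bullet> x = h}" by (rule affine_hyperplane)
    show "affine hull F \<noteq> {}" using pF by simp
    show "affine hull F \<subseteq> {x. u \<bullet> x = h}"
      using uh(4) by (intro hull_minimal) (auto simp: affine_hyperplane)
    show "aff_dim (affine hull F) = aff_dim {x. u \<bullet> x = h}" using affF uh(1) by simp
  qed
  define J where "J = {j\<in>K. b \<bullet> j = 0}"
  have JK: "J \<subseteq> K" unfolding J_def by auto
  have indJ: "independent J" using indK JK independent_mono by blast
  have bu: "b \<bullet> u = h" using bF' uh(4) by (simp add: inner_commute)
  have uJ: "u \<notin> span J"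
  proof
    assume "u \<in> span J"
    then have "orthogonal b u" by (rule orthogonal_to_span) (auto simp: J_def orthogonal_def)
    then show False using bu uh(2) by (simp add: orthogonal_def)
  qed
  then have ind: "independent (insert u J)" using indJ independent_insertI by blast
  obtain d where d: "\<forall>x\<in>insert u J. d \<bullet> x = (if x = u then 0 else 1)"
    using exists_inner_values[OF ind, of "\<lambda>x. if x = u then 0 else 1"] by blast
  have du: "d \<bullet> u = 0" using d by auto
  have dJ: "d \<bullet> j = 1" if "j \<in> J" for j
  proof -
    have "j \<noteq> u" using uJ that span_base by blast
    then show ?thesis using d that by auto
  qed
  have ev: "\<forall>\<^sub>F t in at_right (0::real). 0 < t \<and> t * norm d < e \<and> (\<forall>j\<in>K. j \<notin> J \<longrightarrow> 0 < b \<bullet> j + t * (d \<bullet> j))"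
  proof (intro eventually_conj)
    show "\<forall>\<^sub>F t in at_right (0::real). 0 < t" by (rule eventually_at_right_less)
    have "((\<lambda>t. t * norm d) \<longlongrightarrow> 0 * norm d) (at_right (0::real))" by (intro tendsto_intros)
    then show "\<forall>\<^sub>F t in at_right (0::real). t * norm d < e" using e(1) order_tendstoD(2) by fastforce
    show "\<forall>\<^sub>F t in at_right (0::real). \<forall>j\<in>K. j \<notin> J \<longrightarrow> 0 < b \<bullet> j + t * (d \<bullet> j)"
    proof (rule eventually_ball_finite[OF finK], rule ballI)
      fix j assume j: "j \<in> K"
      show "\<forall>\<^sub>F t in at_right (0::real). j \<notin> J \<longrightarrow> 0 < b \<bullet> j + t * (d \<bullet> j)"
      proof (cases "j \<in> J")
        case True then show ?thesis by simp
      next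
        case False
        have "b \<bullet> j \<ge> 0" using bF j unfolding cone_def b_def by blast
        then have bj: "b \<bullet> j > 0" using False j unfolding J_def by auto
        have "((\<lambda>t. b \<bullet> j + t * (d \<bullet> j)) \<longlongrightarrow> b \<bullet> j + 0 * (d \<bullet> j)) (at_right (0::real))"
          by (intro tendsto_intros)
        then have "\<forall>\<^sub>F t in at_right (0::real). 0 < b \<bullet> j + t * (d \<bullet> j)"
          using bj order_tendstoD(1) by fastforce
        then show ?thesis by (rule eventually_mono) simp
      qed
    qed
  qed
  have "at_right (0::real) \<noteq> bot" by simp
  then obtain t where t: "0 < t" "t * norm d < e" "\<forall>j\<in>K. j \<notin> J \<longrightarrow> 0 < b \<bullet> j + t * (d \<bullet> j)"
    using eventually_happens[OF ev] by blast
  define x where "x = b + t *\<^sub>R d"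
  have "dist b x = t * norm d" unfolding x_def dist_norm using t(1) by simp
  then have "x \<in> ball b e" using t(2) by simp
  moreover have "x \<in> affine hull F"
    unfolding hyp x_def using bu du by (simp add: inner_add_right inner_commute)
  ultimately have xF: "x \<in> F" using e(2) by blast
  have xT: "x \<in> Tpos"
  proof (rule CollectI, rule ballI)
    fix j assume j: "j \<in> K"
    have xj: "x \<bullet> j = b \<bullet> j + t * (d \<bullet> j)" unfolding x_def by (simp add: inner_add_left)
    show "x \<bullet> j > 0"
    proof (cases "j \<in> J")
      case True
      then have "b \<bullet> j = 0" "d \<bullet> j = 1" using dJ unfolding J_def by auto
      then show ?thesis using xj t(1) by simp
    next
      case False then show ?thesis using xj t(3) j by simp
    qed
  qed
  have ne: "F \<inter> Tpos \<noteq> {}" using xF xT by blast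
  have "aff_dim (F \<inter> Tpos) = aff_dim F"
    by (rule aff_dim_convex_Int_open[OF polytope_imp_convex[OF pF(1)] open_Tpos'[of K] ne]) simp
  moreover have "F \<inter> Tpos \<subseteq> F \<inter> cone K" unfolding cone_def by (auto intro: less_imp_le)
  ultimately have ge: "aff_dim F \<le> aff_dim (F \<inter> cone K)" using aff_dim_subset by metis
  have le: "aff_dim (F \<inter> cone K) \<le> aff_dim F" by (rule aff_dim_subset) auto
  have "F \<inter> cone K \<noteq> {}" using bF' bF b_def by blast
  then show ?thesis unfolding facet_of_def using face ge le affF affQ by auto
qed

end



context rsP
begin

lemma zeroP: "0 \<in> P" using zero_interior interior_subset by blast

lemma zero_wall: "k \<in> K \<Longrightarrow> 0 \<in> wall k \<inter> P \<inter> cone K"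
  using zeroP unfolding wall_def cone_def by simp

lemma zero_notin_facet:
  assumes "F facet_of P" shows "0 \<notin> F"
proof
  assume "0 \<in> F"
  obtain u h where uh: "u \<noteq> 0" "h > 0" "P \<subseteq> {x. u \<bullet> x \<le> h}" "F = P \<inter> {x. u \<bullet> x = h}"
    using facet_normal[OF assms] by blast
  then show False using \<open>0 \<in> F\<close> by auto
qed

lemma inj_LL:
  assumes "F facet_of P" "barycenter F \<in> cone K" "F' facet_of P" "F \<inter> cone K = F' \<inter> cone K"
  shows "F = F'"
proof -
  have "barycenter F \<in> F" using bary_in facet_poly[OF assms(1)] by blast
  then have "barycenter F \<in> F'" using assms(2,4) by blast
  then show ?thesis using facet_unique assms(1,3) by blast
qed

lemma inj_RR:
  assumes "k \<in> K" "k' \<in> K" "wall k \<inter> P \<inter> cone K = wall k' \<inter> P \<inter> cone K"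
  shows "k = k'"
proof (rule ccontr)
  assume ne: "k \<noteq> k'"
  obtain y where y: "y \<in> wall k \<inter> P \<inter> cone K" "\<forall>j\<in>K - {k}. y \<bullet> j > 0"
    using wall_facet(2)[OF assms(1)] by blast
  have "y \<bullet> k' > 0" using y(2) assms(2) ne by blast
  moreover have "y \<bullet> k' = 0" using y(1) assms(3) unfolding wall_def by blast
  ultimately show False by simp
qed

lemma inj_LR:
  assumes "F facet_of P" "k \<in> K"
  shows "F \<inter> cone K \<noteq> wall k \<inter> P \<inter> cone K"
  using zero_wall[OF assms(2)] zero_notin_facet[OF assms(1)] by blast

lemma wall_case:
  assumes G: "G facet_of Q" and k: "k \<in> K" and z: "\<forall>y\<in>G. y \<bullet> k = 0"
  shows "G = wall k \<inter> P \<inter> cone K"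
proof (rule facet_sub_eq[OF G wall_facet(1)[OF k]])
  show "G \<subseteq> wall k \<inter> P \<inter> cone K" using z facet_of_imp_subset[OF G] unfolding wall_def by blast
qed

lemma refl_ineq:
  assumes F: "F facet_of P" and uh: "P \<subseteq> {x. u \<bullet> x \<le> h}" "F = P \<inter> {x. u \<bullet> x = h}"
    and y: "y \<in> F" and k: "k \<in> K"
  shows "0 \<le> (y \<bullet> k) * (u \<bullet> k)"
proof -
  have k0: "k \<noteq> 0" using k zK by auto
  have kS: "k \<in> S" using k KS by blast
  have "refl k y \<in> P" using P_inv[OF wg_refl[OF kS]] y uh(2) by blast
  then have "u \<bullet> refl k y \<le> h" using uh(1) by blast
  moreover have "u \<bullet> refl k y = u \<bullet> y - (2 * (y \<bullet> k) / (k \<bullet> k)) * (u \<bullet> k)"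
    unfolding refl_def by (simp add: inner_diff_right)
  moreover have "u \<bullet> y = h" using y uh(2) by blast
  ultimately have "0 \<le> (2 * (y \<bullet> k) / (k \<bullet> k)) * (u \<bullet> k)" by simp
  moreover have "k \<bullet> k > 0" using k0 by simp
  ultimately have "0 \<le> (2 / (k \<bullet> k)) * ((y \<bullet> k) * (u \<bullet> k))" by (simp add: field_simps)
  moreover have "(y \<bullet> k) * (u \<bullet> k) = ((k \<bullet> k) / 2) * ((2 / (k \<bullet> k)) * ((y \<bullet> k) * (u \<bullet> k)))"
    using \<open>k \<bullet> k > 0\<close> by (simp add: field_simps)
  moreover have "0 \<le> (k \<bullet> k) / 2" using \<open>k \<bullet> k > 0\<close> by simp
  ultimately show ?thesis by (metis mult_nonneg_nonneg)
qed

lemma surj_facet: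
  assumes G: "G facet_of Q"
  shows "(\<exists>F. F facet_of P \<and> barycenter F \<in> cone K \<and> G = F \<inter> cone K) \<or> (\<exists>k\<in>K. G = wall k \<inter> P \<inter> cone K)"
proof -
  have Gf: "G face_of Q" using G facet_of_imp_face_of by blast
  have Gc: "convex G" using Gf face_of_imp_convex by blast
  have GQ: "G \<subseteq> Q" using G facet_of_imp_subset by blast
  have GneQ: "G \<noteq> Q" using G by auto
  have "G \<noteq> {}" using G by (simp add: facet_of_def)
  then have "rel_interior G \<noteq> {}" using rel_interior_eq_empty Gc by blast
  then obtain x where xri: "x \<in> rel_interior G" by blast
  have xG: "x \<in> G" using xri rel_interior_subset by blast
  have "G \<inter> rel_interior Q = {}" by (rule face_of_disjoint_rel_interior[OF Gf GneQ])
  then have xnQ: "x \<notin> interior Q" using xG rel_interior_interior[OF affhQ] by blast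
  have face_eq: "G \<subseteq> {y. a \<bullet> y = c}" if "\<forall>y\<in>G. a \<bullet> y \<le> c" "a \<bullet> x = c" for a c
  proof -
    have "(G \<inter> {y. a \<bullet> y = c}) face_of G"
      by (rule face_of_Int_supporting_hyperplane_le[OF Gc]) (use that in auto)
    moreover have "x \<in> (G \<inter> {y. a \<bullet> y = c}) \<inter> rel_interior G" using xG xri that by blast
    ultimately have "G \<inter> {y. a \<bullet> y = c} = G" using face_of_disjoint_rel_interior by blast
    then show ?thesis by blast
  qed
  show ?thesis
  proof (cases "\<exists>k\<in>K. x \<bullet> k \<le> 0")
    case True
    then obtain k where k: "k \<in> K" "x \<bullet> k \<le> 0" by blast
    have "x \<bullet> k \<ge> 0" using xG GQ k unfolding cone_def by blast
    then have xk: "(- k) \<bullet> x = 0" using k by (simp add: inner_commute)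
    have "\<forall>y\<in>G. (- k) \<bullet> y \<le> 0" using GQ k unfolding cone_def by (auto simp: inner_commute)
    then have "G \<subseteq> {y. (- k) \<bullet> y = 0}" using face_eq xk by blast
    then have "\<forall>y\<in>G. y \<bullet> k = 0" by (auto simp: inner_commute)
    then show ?thesis using wall_case[OF G k(1)] k(1) by blast
  next
    case False
    then have xT: "x \<in> Tpos" by (auto simp: not_le)
    have "x \<notin> interior P"
    proof
      assume "x \<in> interior P"
      then have "x \<in> interior P \<inter> Tpos" using xT by blast
      moreover have "open (interior P \<inter> Tpos)" using open_Tpos'[of K] by blast
      moreover have "interior P \<inter> Tpos \<subseteq> Q"
        using interior_subset unfolding cone_def by (auto intro: less_imp_le)
      ultimately have "x \<in> interior Q" using interior_maximal by blast
      then show False using xnQ by simp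
    qed
    then have "x \<in> P - rel_interior P" using xG GQ rel_interior_interior[OF affP] by blast
    then have "x \<in> \<Union> {F. F facet_of P}" using rel_boundary_of_polyhedron[OF polyhP] by simp
    then obtain F where F: "F facet_of P" "x \<in> F" by blast
    obtain u h where uh: "u \<noteq> 0" "h > 0" "P \<subseteq> {x. u \<bullet> x \<le> h}" "F = P \<inter> {x. u \<bullet> x = h}"
      using facet_normal[OF F(1)] by blast
    have "\<forall>y\<in>G. u \<bullet> y \<le> h" using GQ uh(3) by blast
    moreover have "u \<bullet> x = h" using F(2) uh(4) by blast
    ultimately have "G \<subseteq> {y. u \<bullet> y = h}" using face_eq by blast
    then have GF: "G \<subseteq> F \<inter> cone K" using GQ uh(4) by blast
    have uk: "u \<bullet> k \<ge> 0" if k: "k \<in> K" for k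
    proof -
      have "\<exists>y\<in>G. y \<bullet> k \<noteq> 0"
      proof (rule ccontr)
        assume "\<not> ?thesis"
        then have "G = wall k \<inter> P \<inter> cone K" using wall_case[OF G k] by blast
        then have "0 \<in> F" using zero_wall[OF k] GF by blast
        then show False using zero_notin_facet[OF F(1)] by blast
      qed
      then obtain y where y: "y \<in> G" "y \<bullet> k \<noteq> 0" by blast
      have "y \<bullet> k \<ge> 0" using y(1) GQ k unfolding cone_def by blast
      then have yk: "y \<bullet> k > 0" using y(2) by simp
      have "0 \<le> (y \<bullet> k) * (u \<bullet> k)" using refl_ineq[OF F(1) uh(3,4) _ k] y(1) GF by blast
      then show ?thesis using yk by (simp add: zero_le_mult_iff)
    qed
    define b where "b = barycenter F"
    have bF: "b \<in> F" using bary_in facet_poly[OF F(1)] b_def by blast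
    have "b \<bullet> k \<ge> 0" if k: "k \<in> K" for k
    proof (cases "u \<bullet> k = 0")
      case False
      then have "u \<bullet> k > 0" using uk[OF k] by simp
      moreover have "0 \<le> (b \<bullet> k) * (u \<bullet> k)" using refl_ineq[OF F(1) uh(3,4) bF k] .
      ultimately show ?thesis by (simp add: zero_le_mult_iff)
    next
      case True
      have k0: "k \<noteq> 0" using k zK by auto
      have kS: "k \<in> S" using k KS by blast
      have rF: "refl k y \<in> F" if "y \<in> F" for y
      proof -
        have "refl k y \<in> P" using P_inv[OF wg_refl[OF kS]] that uh(4) by blast
        moreover have "u \<bullet> refl k y = u \<bullet> y" unfolding refl_def using True by (simp add: inner_diff_right)
        ultimately show ?thesis using that uh(4) by simp
      qed
      have "refl k ` F = F"
      proof
        show "refl k ` F \<subseteq> F" using rF by blast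
        show "F \<subseteq> refl k ` F"
        proof
          fix y assume "y \<in> F"
          then have "refl k y \<in> F" by (rule rF)
          moreover have "y = refl k (refl k y)" using refl_refl[OF k0] by simp
          ultimately show "y \<in> refl k ` F" by blast
        qed
      qed
      then have "refl k b = b" using bary_image[OF wg_refl[OF kS], of F] b_def by simp
      then have "b \<bullet> k = 0" using refl_fix_iff[OF k0] by simp
      then show ?thesis by simp
    qed
    then have bc: "barycenter F \<in> cone K" unfolding cone_def b_def by blast
    have "G = F \<inter> cone K" by (rule facet_sub_eq[OF G F_facet[OF F(1) bc] GF])
    then show ?thesis using F(1) bc by blast
  qed
qed

lemma part1:
  "bij_betw (case_sum (\<lambda>F. F \<inter> cone K) (\<lambda>k. wall k \<inter> P \<inter> cone K))
     (Inl ` {F. F facet_of P \<and> barycenter F \<in> cone K} \<union> Inr ` K)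
     {G. G facet_of (P \<inter> cone K)}"
proof (rule bij_betw_imageI)
  show "inj_on (case_sum (\<lambda>F. F \<inter> cone K) (\<lambda>k. wall k \<inter> P \<inter> cone K))
     (Inl ` {F. F facet_of P \<and> barycenter F \<in> cone K} \<union> Inr ` K)"
  proof (rule inj_onI)
    fix x y
    assume x: "x \<in> Inl ` {F. F facet_of P \<and> barycenter F \<in> cone K} \<union> Inr ` K"
      and y: "y \<in> Inl ` {F. F facet_of P \<and> barycenter F \<in> cone K} \<union> Inr ` K"
      and eq: "case_sum (\<lambda>F. F \<inter> cone K) (\<lambda>k. wall k \<inter> P \<inter> cone K) x =
               case_sum (\<lambda>F. F \<inter> cone K) (\<lambda>k. wall k \<inter> P \<inter> cone K) y"
    show "x = y"
    proof (cases x)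
      case (Inl F)
      then have F: "F facet_of P" "barycenter F \<in> cone K" using x by auto
      show ?thesis
      proof (cases y)
        case (Inl F')
        then have F': "F' facet_of P" using y by auto
        have "F = F'" using inj_LL[OF F F'] eq \<open>x = Inl F\<close> Inl by simp
        then show ?thesis using \<open>x = Inl F\<close> Inl by simp
      next
        case (Inr k)
        then have "k \<in> K" using y by auto
        then show ?thesis using inj_LR[OF F(1)] eq \<open>x = Inl F\<close> Inr by simp
      qed
    next
      case (Inr k)
      then have k: "k \<in> K" using x by auto
      show ?thesis
      proof (cases y)
        case (Inl F')
        then have F': "F' facet_of P" using y by auto
        then show ?thesis using inj_LR[OF F' k] eq \<open>x = Inr k\<close> Inl by simp
      next
        case (Inr k')
        then have "k' \<in> K" using y by auto
        then have "k = k'" using inj_RR[OF k] eq \<open>x = Inr k\<close> Inr by simp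
        then show ?thesis using \<open>x = Inr k\<close> Inr by simp
      qed
    qed
  qed
  show "case_sum (\<lambda>F. F \<inter> cone K) (\<lambda>k. wall k \<inter> P \<inter> cone K) `
     (Inl ` {F. F facet_of P \<and> barycenter F \<in> cone K} \<union> Inr ` K) = {G. G facet_of (P \<inter> cone K)}"
  proof (rule equalityI)
    show "case_sum (\<lambda>F. F \<inter> cone K) (\<lambda>k. wall k \<inter> P \<inter> cone K) `
     (Inl ` {F. F facet_of P \<and> barycenter F \<in> cone K} \<union> Inr ` K) \<subseteq> {G. G facet_of (P \<inter> cone K)}"
      using F_facet wall_facet(1) by auto
    show "{G. G facet_of (P \<inter> cone K)} \<subseteq> case_sum (\<lambda>F. F \<inter> cone K) (\<lambda>k. wall k \<inter> P \<inter> cone K) `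
     (Inl ` {F. F facet_of P \<and> barycenter F \<in> cone K} \<union> Inr ` K)"
    proof
      fix G assume "G \<in> {G. G facet_of (P \<inter> cone K)}"
      then have G: "G facet_of Q" by simp
      from surj_facet[OF G] show "G \<in> case_sum (\<lambda>F. F \<inter> cone K) (\<lambda>k. wall k \<inter> P \<inter> cone K) `
        (Inl ` {F. F facet_of P \<and> barycenter F \<in> cone K} \<union> Inr ` K)"
      proof
        assume "\<exists>F. F facet_of P \<and> barycenter F \<in> cone K \<and> G = F \<inter> cone K"
        then obtain F where F: "F facet_of P" "barycenter F \<in> cone K" "G = F \<inter> cone K" by blast
        then have "G = case_sum (\<lambda>F. F \<inter> cone K) (\<lambda>k. wall k \<inter> P \<inter> cone K) (Inl F)" by simp
        moreover have "Inl F \<in> Inl ` {F. F facet_of P \<and> barycenter F \<in> cone K} \<union> Inr ` K" using F by blast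
        ultimately show ?thesis by blast
      next
        assume "\<exists>k\<in>K. G = wall k \<inter> P \<inter> cone K"
        then obtain k where k: "k \<in> K" "G = wall k \<inter> P \<inter> cone K" by blast
        then have "G = case_sum (\<lambda>F. F \<inter> cone K) (\<lambda>k. wall k \<inter> P \<inter> cone K) (Inr k)" by simp
        moreover have "Inr k \<in> Inl ` {F. F facet_of P \<and> barycenter F \<in> cone K} \<union> Inr ` K" using k by blast
        ultimately show ?thesis by blast
      qed
    qed
  qed
qed

end


theorem proposition2p4:
  fixes R S K \<Lambda> :: "'a::euclidean_space set" and P :: "'a set"
  assumes "root_system R" and "reduced R" and "simple_system R S"
    and "finite \<Lambda>" and "\<Lambda> \<subseteq> cone S"
    and "P = convex hull (\<Union>w\<in>weyl_group S. w ` \<Lambda>)"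
    and "aff_dim P = int DIM('a)"
    and "K \<subseteq> S"
  shows "bij_betw (case_sum (\<lambda>F. F \<inter> cone K) (\<lambda>k. wall k \<inter> P \<inter> cone K))
           (Inl ` {F. F facet_of P \<and> barycenter F \<in> cone K} \<union> Inr ` K)
           {G. G facet_of (P \<inter> cone K)}
       \<and> bij_betw (\<lambda>(F, C). (SOME w. w \<in> C) ` F)
           {(F, C). F facet_of P \<and> barycenter F \<in> cone K \<and> C \<in> left_cosets K F}
           {G. G facet_of P}"
proof -
  interpret rsP R S K \<Lambda> P
    using assms by unfold_locales auto
  show ?thesis using part1 part2 by blast
qed

end
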